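(* Let $S$ be an additively reduced semidomain and $G$ a torsion-free abelian group. Let $f=\sum_{i=0}^\infty s_ix^{g_i}\in S[\![G]\!]$ with $|\operatorname{supp}(f)|>1$. Then $f$ is irreducible if and only if $f$ is monolithic and $1\in\gcd(\{s_i : i\in\mathbb{N}_0\})$.
   Context: A semidomain is a subsemiring (containing $0$ and $1$) of an integral domain; $S^\times$ is the unit group of the multiplicative monoid $S\setminus\{0\}$. $S$ is additively reduced if $0$ is the only invertible element of $(S,+)$. $G$ carries a fixed total order compatible with addition. $S[\![G]\!]=\{\sum_{i=0}^\infty s_ix^{g_i} : s_i\in S,\ g_i\in G,\ g_i<g_{i+1}\}$ with operations defined as for polynomials; elements are written so that $s_i=0$ implies $s_{i+1}=0$; $\operatorname{supp}(f)=\{g_i: s_i\neq0\}$. $f$ is irreducible if it is nonzero, a nonunit of $S[\![G]\!]$, and $f=pq$ implies $p$ or $q$ is a unit. A nonzero $f$ is monolithic if $f=pq$ with $p,q\in S[\![G]\!]$ implies one of $p,q$ is a monomial $sx^g$. For a set $B$ of elements of $S$, $1\in\gcd(B)$ means $1$ is a greatest common divisor of the nonzero elements of $B$ in the multiplicative monoid $S\setminus\{0\}$, i.e. every common divisor of them is a unit of $S$. *)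

theory Defs
  imports Main
begin

definition semidomain :: "'a::idom set \<Rightarrow> bool" where
  "semidomain S \<longleftrightarrow> 0 \<in> S \<and> 1 \<in> S \<and>
     (\<forall>a\<in>S. \<forall>b\<in>S. a + b \<in> S) \<and> (\<forall>a\<in>S. \<forall>b\<in>S. a * b \<in> S)"

definition add_reduced :: "'a::idom set \<Rightarrow> bool" where
  "add_reduced S \<longleftrightarrow> (\<forall>a\<in>S. (\<exists>b\<in>S. a + b = 0) \<longrightarrow> a = 0)"

definition sunit :: "'a::idom set \<Rightarrow> 'a \<Rightarrow> bool" where
  "sunit S u \<longleftrightarrow> u \<in> S \<and> u \<noteq> 0 \<and> (\<exists>v\<in>S. u * v = 1)"

definition sdvd :: "'a::idom set \<Rightarrow> 'a \<Rightarrow> 'a \<Rightarrow> bool" where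
  "sdvd S d a \<longleftrightarrow> (\<exists>t\<in>S. a = d * t)"

definition one_in_gcd :: "'a::idom set \<Rightarrow> 'a set \<Rightarrow> bool" where
  "one_in_gcd S B \<longleftrightarrow>
     (\<forall>d\<in>S - {0}. (\<forall>b\<in>B - {0}. sdvd S d b) \<longrightarrow> sdvd S d 1)"

text \<open>Series are represented as coefficient functions G \<Rightarrow> S.\<close>
definition supp :: "('g \<Rightarrow> 'a::zero) \<Rightarrow> 'g set" where
  "supp f = {g. f g \<noteq> 0}"

text \<open>Elements of S[[G]]: coefficients in S and support of the form
  g_0 < g_1 < ... (finite or of order type omega), i.e. each support element
  has only finitely many smaller support elements.\<close>
definition in_SG :: "'a::idom set \<Rightarrow> ('g::linordered_ab_group_add \<Rightarrow> 'a) \<Rightarrow> bool" where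
  "in_SG S f \<longleftrightarrow> (\<forall>g. f g \<in> S) \<and> (\<forall>g\<in>supp f. finite {h\<in>supp f. h < g})"

definition sg_mult :: "('g::linordered_ab_group_add \<Rightarrow> 'a::idom) \<Rightarrow> ('g \<Rightarrow> 'a) \<Rightarrow> 'g \<Rightarrow> 'a" where
  "sg_mult p q = (\<lambda>h. \<Sum>a\<in>{a\<in>supp p. h - a \<in> supp q}. p a * q (h - a))"

definition sg_one :: "'g::linordered_ab_group_add \<Rightarrow> 'a::idom" where
  "sg_one = (\<lambda>g. if g = 0 then 1 else 0)"

definition sg_unit :: "'a::idom set \<Rightarrow> ('g::linordered_ab_group_add \<Rightarrow> 'a) \<Rightarrow> bool" where
  "sg_unit S u \<longleftrightarrow> in_SG S u \<and> (\<exists>v. in_SG S v \<and> sg_mult u v = sg_one)"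

definition sg_irreducible :: "'a::idom set \<Rightarrow> ('g::linordered_ab_group_add \<Rightarrow> 'a) \<Rightarrow> bool" where
  "sg_irreducible S f \<longleftrightarrow> f \<noteq> (\<lambda>_. 0) \<and> \<not> sg_unit S f \<and>
     (\<forall>p q. in_SG S p \<and> in_SG S q \<and> f = sg_mult p q \<longrightarrow> sg_unit S p \<or> sg_unit S q)"

definition sg_monomial :: "'a::idom set \<Rightarrow> ('g::linordered_ab_group_add \<Rightarrow> 'a) \<Rightarrow> bool" where
  "sg_monomial S p \<longleftrightarrow> (\<exists>s\<in>S. \<exists>g. p = (\<lambda>h. if h = g then s else 0))"

definition sg_monolithic :: "'a::idom set \<Rightarrow> ('g::linordered_ab_group_add \<Rightarrow> 'a) \<Rightarrow> bool" where
  "sg_monolithic S f \<longleftrightarrow> f \<noteq> (\<lambda>_. 0) \<and>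
     (\<forall>p q. in_SG S p \<and> in_SG S q \<and> f = sg_mult p q \<longrightarrow> sg_monomial S p \<or> sg_monomial S q)"

end

theory Submission
  imports Defs
begin

lemma sum_in_S:
  assumes "semidomain S" "finite A" "\<forall>x\<in>A. h x \<in> S"
  shows "sum h A \<in> S"
  using assms(2,3)
proof (induction A rule: finite_induct)
  case empty then show ?case using assms(1) by (simp add: semidomain_def)
next
  case (insert x F) then show ?case using assms(1) by (simp add: semidomain_def)
qed

lemma fin_conv:
  assumes "in_SG S p" "in_SG S q" "a \<in> supp p" "b \<in> supp q"
  shows "finite {a'\<in>supp p. a+b-a' \<in> supp q}"
proof -
  have f1: "finite {h\<in>supp p. h<a}" using assms unfolding in_SG_def by blast
  have f2: "finite {h\<in>supp q. h<b}" using assms unfolding in_SG_def by blast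
  have "{a'\<in>supp p. a+b-a' \<in> supp q} \<subseteq> insert a {h\<in>supp p. h<a} \<union> (\<lambda>b'. a+b-b') ` {h\<in>supp q. h<b}"
  proof
    fix a' assume a': "a' \<in> {a'\<in>supp p. a+b-a' \<in> supp q}"
    show "a' \<in> insert a {h\<in>supp p. h<a} \<union> (\<lambda>b'. a+b-b') ` {h\<in>supp q. h<b}"
    proof (cases "a < a'")
      case True
      have "a+b-a' < b" using True by (simp add: algebra_simps)
      moreover have "a' = a+b-(a+b-a')" by simp
      ultimately show ?thesis using a' by blast
    next
      case False
      then show ?thesis using a' by auto
    qed
  qed
  moreover have "finite (insert a {h\<in>supp p. h<a} \<union> (\<lambda>b'. a+b-b') ` {h\<in>supp q. h<b})"
    using f1 f2 by simp
  ultimately show ?thesis by (rule finite_subset)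
qed

lemma mult_nz:
  assumes sd: "semidomain S" and ar: "add_reduced S" and p: "in_SG S p" and q: "in_SG S q"
    and a: "a \<in> supp p" and b: "b \<in> supp q"
  shows "sg_mult p q (a+b) \<noteq> 0"
proof
  assume z: "sg_mult p q (a+b) = 0"
  let ?A = "{a'\<in>supp p. a+b-a' \<in> supp q}"
  have fin: "finite ?A" by (rule fin_conv[OF p q a b])
  have aA: "a \<in> ?A" using a b by simp
  have eq: "sg_mult p q (a+b) = p a * q b + sum (\<lambda>a'. p a' * q (a+b-a')) (?A - {a})"
    unfolding sg_mult_def using sum.remove[OF fin aA, of "\<lambda>a'. p a' * q (a+b-a')"] by simp
  have pS: "\<And>g. p g \<in> S" and qS: "\<And>g. q g \<in> S" using p q by (auto simp: in_SG_def)
  have r: "sum (\<lambda>a'. p a' * q (a+b-a')) (?A - {a}) \<in> S"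
    apply (rule sum_in_S[OF sd]) using fin apply simp
    using pS qS sd by (simp add: semidomain_def)
  have m: "p a * q b \<in> S" using pS qS sd by (simp add: semidomain_def)
  have "\<exists>c\<in>S. p a * q b + c = 0" using r z eq by auto
  then have "p a * q b = 0" using ar m unfolding add_reduced_def by blast
  then show False using a b by (simp add: supp_def)
qed

lemma unit_supp:
  assumes sd: "semidomain S" and ar: "add_reduced S" and u: "sg_unit S u"
    and a: "a \<in> supp u" and c: "c \<in> supp u"
  shows "a = c"
proof -
  obtain v where v: "in_SG S v" "sg_mult u v = sg_one" and uS: "in_SG S u"
    using u unfolding sg_unit_def by blast
  have "\<exists>b. b \<in> supp v"
  proof (rule ccontr)
    assume "\<not> (\<exists>b. b \<in> supp v)"
    then have "supp v = {}" by blast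
    then have "sg_mult u v 0 = 0" unfolding sg_mult_def by simp
    then show False using v(2) by (simp add: sg_one_def)
  qed
  then obtain b where b: "b \<in> supp v" by blast
  have "sg_mult u v (a+b) \<noteq> 0" by (rule mult_nz[OF sd ar uS v(1) a b])
  then have "a + b = 0" using v(2) by (auto simp: sg_one_def split: if_splits)
  moreover have "sg_mult u v (c+b) \<noteq> 0" by (rule mult_nz[OF sd ar uS v(1) c b])
  then have "c + b = 0" using v(2) by (auto simp: sg_one_def split: if_splits)
  ultimately show ?thesis by (metis add_right_cancel)
qed

lemma mult_mono_left:
  "sg_mult (\<lambda>h. if h = g then s else 0) q = (\<lambda>h. s * q (h - g))"
proof
  fix h
  show "sg_mult (\<lambda>h. if h = g then s else 0) q h = s * q (h - g)"
  proof (cases "s = 0")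
    case True
    then show ?thesis by (simp add: sg_mult_def supp_def)
  next
    case False
    then have "supp (\<lambda>h. if h = g then s else 0) = {g}" by (auto simp: supp_def)
    then have e: "sg_mult (\<lambda>h. if h = g then s else 0) q h = (\<Sum>a\<in>{a\<in>{g}. h - a \<in> supp q}. s * q (h - a))"
      unfolding sg_mult_def by (intro sum.cong) auto
    show ?thesis
    proof (cases "q (h - g) = 0")
      case True
      then have "{a\<in>{g}. h - a \<in> supp q} = {}" by (auto simp: supp_def)
      then show ?thesis using e True by simp
    next
      case False
      then have "{a\<in>{g}. h - a \<in> supp q} = {g}" by (auto simp: supp_def)
      then show ?thesis using e by simp
    qed
  qed
qed

lemma mult_mono_right:
  "sg_mult p (\<lambda>h. if h = g then s else 0) = (\<lambda>h. p (h - g) * s)"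
proof
  fix h
  show "sg_mult p (\<lambda>h. if h = g then s else 0) h = p (h - g) * s"
  proof (cases "s = 0")
    case True
    then show ?thesis by (simp add: sg_mult_def supp_def)
  next
    case False
    then have "supp (\<lambda>h. if h = g then s else 0) = {g}" by (auto simp: supp_def)
    moreover have "{a \<in> supp p. h - a \<in> {g}} = {h - g} \<inter> supp p" by (auto simp: algebra_simps)
    ultimately have e: "sg_mult p (\<lambda>h. if h = g then s else 0) h = (\<Sum>a\<in>{h - g} \<inter> supp p. p a * s)"
      unfolding sg_mult_def by (intro sum.cong) auto
    show ?thesis
    proof (cases "p (h - g) = 0")
      case True
      then have "{h - g} \<inter> supp p = {}" by (auto simp: supp_def)
      then show ?thesis using e True by simp
    next
      case False
      then have "{h - g} \<inter> supp p = {h - g}" by (auto simp: supp_def)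
      then show ?thesis using e by simp
    qed
  qed
qed

lemma mono_in_SG:
  assumes "s \<in> S" "semidomain S"
  shows "in_SG S (\<lambda>h. if h = g then s else 0)"
proof -
  have "supp (\<lambda>h. if h = g then s else 0) \<subseteq> {g}" by (auto simp: supp_def)
  then have "finite (supp (\<lambda>h. if h = g then s else 0))" using finite_subset by blast
  then show ?thesis using assms unfolding in_SG_def semidomain_def by auto
qed

theorem lemma4p1:
  fixes S :: "'a::idom set" and f :: "'g::linordered_ab_group_add \<Rightarrow> 'a"
  assumes "semidomain S" and "add_reduced S"
    and "in_SG S f"
    and "\<exists>a b. a \<in> supp f \<and> b \<in> supp f \<and> a \<noteq> b"
  shows "sg_irreducible S f \<longleftrightarrow> sg_monolithic S f \<and> one_in_gcd S (range f)"
proof -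
  note sd = assms(1) and ar = assms(2) and fS = assms(3)
  obtain a0 b0 where ab: "a0 \<in> supp f" "b0 \<in> supp f" "a0 \<noteq> b0" using assms(4) by blast
  have unit_mono: "sg_monomial S u" if u: "sg_unit S u" for u :: "'g \<Rightarrow> 'a"
  proof (cases "supp u = {}")
    case True
    then have "u = (\<lambda>h. if h = 0 then 0 else 0)" by (auto simp: supp_def)
    then show ?thesis using sd unfolding sg_monomial_def semidomain_def by blast
  next
    case False
    then obtain g where g: "g \<in> supp u" by blast
    have "u = (\<lambda>h. if h = g then u g else 0)"
      
    proof
      fix h show "u h = (if h = g then u g else 0)"
      proof (cases "h = g")
        case False
        then have "h \<notin> supp u" using unit_supp[OF sd ar u _ g] by blast
        then show ?thesis using False by (simp add: supp_def)
      qed simp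
    qed
    moreover have "u g \<in> S" using u by (simp add: sg_unit_def in_SG_def)
    ultimately show ?thesis unfolding sg_monomial_def by blast
  qed
  have notunit: "\<not> sg_unit S f"
  proof
    assume "sg_unit S f"
    then have "a0 = b0" by (rule unit_supp[OF sd ar _ ab(1) ab(2)])
    then show False using ab(3) by simp
  qed
  have fnz: "f \<noteq> (\<lambda>_. 0)" using ab(1) by (auto simp: supp_def)
  show ?thesis
  proof
    assume irr: "sg_irreducible S f"
    have mono: "sg_monolithic S f"
      unfolding sg_monolithic_def
    proof (intro conjI allI impI)
      fix p q assume "in_SG S p \<and> in_SG S q \<and> f = sg_mult p q"
      then have "sg_unit S p \<or> sg_unit S q" using irr unfolding sg_irreducible_def by blast
      then show "sg_monomial S p \<or> sg_monomial S q" using unit_mono by blast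
    qed (rule fnz)
    have gcd: "one_in_gcd S (range f)"
      unfolding one_in_gcd_def
    proof (intro ballI impI)
      fix d assume d: "d \<in> S - {0}" and dv: "\<forall>b\<in>range f - {0}. sdvd S d b"
      define t where "t = (\<lambda>g. if f g = 0 then 0 else (SOME t. t \<in> S \<and> f g = d * t))"
      have tprop: "t g \<in> S \<and> f g = d * t g" for g
      proof (cases "f g = 0")
        case True then show ?thesis using sd by (simp add: t_def semidomain_def)
      next
        case False
        then have "\<exists>t. t \<in> S \<and> f g = d * t" using dv unfolding sdvd_def by auto
        from someI_ex[OF this] show ?thesis using False unfolding t_def by simp
      qed
      have suppt: "supp t = supp f"
      proof -
        have "t g \<noteq> 0 \<longleftrightarrow> f g \<noteq> 0" for g
        proof
          assume "t g \<noteq> 0" then show "f g \<noteq> 0" unfolding t_def by (cases "f g = 0") simp_all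
        next
          assume "f g \<noteq> 0" then show "t g \<noteq> 0" using tprop[of g] by auto
        qed
        then show ?thesis unfolding supp_def by blast
      qed
      have tS: "in_SG S t" using tprop suppt fS unfolding in_SG_def by simp
      have dm: "in_SG S (\<lambda>h::'g. if h = 0 then d else 0)" using mono_in_SG d sd by blast
      have feq: "f = sg_mult (\<lambda>h::'g. if h = 0 then d else 0) t"
        unfolding mult_mono_left using tprop by auto
      have "sg_unit S (\<lambda>h::'g. if h = 0 then d else 0) \<or> sg_unit S t"
      proof -
        have "\<forall>p q. in_SG S p \<and> in_SG S q \<and> f = sg_mult p q \<longrightarrow> sg_unit S p \<or> sg_unit S q"
          using irr unfolding sg_irreducible_def by (elim conjE)
        from this[rule_format, OF conjI[OF dm conjI[OF tS feq]]] show ?thesis by simp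
      qed
      moreover have "\<not> sg_unit S t"
      proof
        assume "sg_unit S t"
        then have "a0 = b0" by (rule unit_supp[OF sd ar _ ab(1)[folded suppt] ab(2)[folded suppt]])
        then show False using ab(3) by simp
      qed
      ultimately have "sg_unit S (\<lambda>h::'g. if h = 0 then d else 0)" by blast
      then obtain v where v: "in_SG S v" "sg_mult (\<lambda>h::'g. if h = 0 then d else 0) v = sg_one"
        unfolding sg_unit_def by blast
      have "d * v 0 = 1" using fun_cong[OF v(2), of 0] unfolding mult_mono_left
        by (simp add: sg_one_def)
      moreover have "v 0 \<in> S" using v(1) by (simp add: in_SG_def)
      ultimately show "sdvd S d 1" unfolding sdvd_def by (intro bexI[of _ "v 0"]) simp_all
    qed
    show "sg_monolithic S f \<and> one_in_gcd S (range f)" using mono gcd by blast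
  next
    assume rhs: "sg_monolithic S f \<and> one_in_gcd S (range f)"
    have key: "sg_unit S (\<lambda>h. if h = g then s else 0)"
      if sS: "s \<in> S" and dv: "\<And>h. f h \<noteq> 0 \<Longrightarrow> sdvd S s (f h)" and snz: "s \<noteq> 0" for s g
    proof -
      have "sdvd S s 1" using rhs sS snz dv unfolding one_in_gcd_def by blast
      then obtain t where t: "t \<in> S" "1 = s * t" unfolding sdvd_def by blast
      have "sg_mult (\<lambda>h. if h = g then s else 0) (\<lambda>h. if h = - g then t else 0) = sg_one"
        unfolding mult_mono_left sg_one_def
      proof
        fix h
        have "(h - g = - g) = (h = 0)" by (auto simp: diff_eq_eq)
        then show "s * (if h - g = - g then t else 0) = (if h = 0 then 1 else 0)" using t(2) by simp
      qed
      then show ?thesis unfolding sg_unit_def using mono_in_SG[OF sS sd] mono_in_SG[OF t(1) sd] by blast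
    qed
    have "sg_unit S p \<or> sg_unit S q" if pq: "in_SG S p" "in_SG S q" "f = sg_mult p q" for p q
    proof -
      have "sg_monomial S p \<or> sg_monomial S q" using rhs pq unfolding sg_monolithic_def by blast
      then show ?thesis
      proof
        assume "sg_monomial S p"
        then obtain s g where s: "s \<in> S" "p = (\<lambda>h. if h = g then s else 0)"
          unfolding sg_monomial_def by blast
        have fe: "f h = s * q (h - g)" for h using pq(3) s(2) by (simp add: mult_mono_left)
        have qS: "q x \<in> S" for x using pq(2) by (simp add: in_SG_def)
        have "s \<noteq> 0" using fe fnz by auto
        moreover have "sdvd S s (f h)" for h using fe qS unfolding sdvd_def by blast
        ultimately show ?thesis using key s by blast
      next
        assume "sg_monomial S q"
        then obtain s g where s: "s \<in> S" "q = (\<lambda>h. if h = g then s else 0)"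
          unfolding sg_monomial_def by blast
        have fe: "f h = s * p (h - g)" for h using pq(3) s(2) by (simp add: mult_mono_right mult.commute)
        have pS: "p x \<in> S" for x using pq(1) by (simp add: in_SG_def)
        have "s \<noteq> 0" using fe fnz by auto
        moreover have "sdvd S s (f h)" for h using fe pS unfolding sdvd_def by blast
        ultimately show ?thesis using key s by blast
      qed
    qed
    then show "sg_irreducible S f" unfolding sg_irreducible_def using fnz notunit by blast
  qed
qed

end
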